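(* Let $M$ be a graded generalized Eulerian $A_n(K)$-module. Then for every $i\ge0$ the Koszul homology $H_i(X_1,\dots,X_n;M)$ is concentrated in degree $0$.
   Context: $K$ is a field of characteristic zero, $R=K[X_1,\dots,X_n]$ standard graded, $A_n(K)$ the Weyl algebra graded by $\deg X_i=1$, $\deg\partial_i=-1$; $\mathcal E_n=\sum_iX_i\partial_i$; $|z|$ is the degree of homogeneous $z$. A graded left $A_n(K)$-module $M$ is generalized Eulerian if for every homogeneous $z\in M$ there is $a\ge1$ with $(\mathcal E_n-|z|)^az=0$. Koszul homology $H_i(X_1,\dots,X_n;M)$ is computed from the graded Koszul complex $K_p=\bigoplus_{i_1<\dots<i_p}M(-p)$ with degree-$0$ differentials, so $H_0=M/(X_1,\dots,X_n)M$; here $M(l)_j=M_{j+l}$. *)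

theory Defs
  imports Complex_Main
begin

text \<open>A graded left module over the Weyl algebra A_n(K), K a field of characteristic 0.
  The module is the abelian group 'm with K-scalar multiplication scale; the graded pieces are
  Mg j (j an integer); the generators X_i and d_i (i < n) act by the maps X i and D i.\<close>

definition weyl_graded_module ::
  "('k::field_char_0 \<Rightarrow> 'm::ab_group_add \<Rightarrow> 'm) \<Rightarrow> nat \<Rightarrow> (int \<Rightarrow> 'm set)
    \<Rightarrow> (nat \<Rightarrow> 'm \<Rightarrow> 'm) \<Rightarrow> (nat \<Rightarrow> 'm \<Rightarrow> 'm) \<Rightarrow> bool" where
  "weyl_graded_module scale n Mg X D \<longleftrightarrow>
     vector_space scale \<and>
     (\<forall>j. module.subspace scale (Mg j)) \<and>
     (\<forall>z. \<exists>!f. finite {j. f j \<noteq> 0} \<and> (\<forall>j. f j \<in> Mg j) \<and> z = sum f {j. f j \<noteq> 0}) \<and>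
     (\<forall>i<n. Vector_Spaces.linear scale scale (X i) \<and> Vector_Spaces.linear scale scale (D i)) \<and>
     (\<forall>i<n. \<forall>j. \<forall>z\<in>Mg j. X i z \<in> Mg (j + 1) \<and> D i z \<in> Mg (j - 1)) \<and>
     (\<forall>i<n. \<forall>k<n. \<forall>z. X i (X k z) = X k (X i z) \<and> D i (D k z) = D k (D i z) \<and>
        D i (X k z) - X k (D i z) = (if i = k then z else 0))"

definition euler_op :: "nat \<Rightarrow> (nat \<Rightarrow> 'm \<Rightarrow> 'm) \<Rightarrow> (nat \<Rightarrow> 'm \<Rightarrow> 'm) \<Rightarrow> 'm \<Rightarrow> 'm::ab_group_add" where
  "euler_op n X D z = (\<Sum>i<n. X i (D i z))"

definition generalized_eulerian ::
  "('k::field_char_0 \<Rightarrow> 'm::ab_group_add \<Rightarrow> 'm) \<Rightarrow> nat \<Rightarrow> (int \<Rightarrow> 'm set)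
    \<Rightarrow> (nat \<Rightarrow> 'm \<Rightarrow> 'm) \<Rightarrow> (nat \<Rightarrow> 'm \<Rightarrow> 'm) \<Rightarrow> bool" where
  "generalized_eulerian scale n Mg X D \<longleftrightarrow>
     (\<forall>j. \<forall>z\<in>Mg j. \<exists>a::nat. a \<ge> 1 \<and>
        ((\<lambda>w. euler_op n X D w - scale (of_int j) w) ^^ a) z = 0)"

text \<open>Koszul complex: a p-chain is a function on p-element subsets of {0..<n}
  (zero elsewhere) with values in M(-p); it is homogeneous of degree j if each
  value lies in M(-p)_j = M_{j-p}.\<close>
definition koszul_chain :: "nat \<Rightarrow> (int \<Rightarrow> 'm::zero set) \<Rightarrow> nat \<Rightarrow> int \<Rightarrow> (nat set \<Rightarrow> 'm) \<Rightarrow> bool" where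
  "koszul_chain n Mg p j c \<longleftrightarrow>
     (\<forall>S. c S \<noteq> 0 \<longrightarrow> S \<subseteq> {..<n} \<and> card S = p) \<and> (\<forall>S. c S \<in> Mg (j - int p))"

definition koszul_d :: "nat \<Rightarrow> (nat \<Rightarrow> 'm \<Rightarrow> 'm) \<Rightarrow> (nat set \<Rightarrow> 'm) \<Rightarrow> nat set \<Rightarrow> 'm::ab_group_add" where
  "koszul_d n X c T = (\<Sum>k\<in>{..<n} - T.
      (if even (card {t\<in>T. t < k}) then X k (c (insert k T)) else - X k (c (insert k T))))"

end

theory Submission
  imports Defs
begin

definition sg :: "nat \<Rightarrow> 'm::ab_group_add \<Rightarrow> 'm" where
  "sg e x = (if even e then x else - x)"

definition cnt :: "nat set \<Rightarrow> nat \<Rightarrow> nat" where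
  "cnt T k = card {t\<in>T. t < k}"

definition kh :: "nat \<Rightarrow> (nat \<Rightarrow> 'm \<Rightarrow> 'm) \<Rightarrow> (nat set \<Rightarrow> 'm) \<Rightarrow> nat set \<Rightarrow> 'm::ab_group_add" where
  "kh n D c T = (if T \<subseteq> {..<n} then (\<Sum>l\<in>T. sg (cnt (T - {l}) l) (D l (c (T - {l})))) else 0)"

lemma koszul_d_sg: "koszul_d n X c T = (\<Sum>k\<in>{..<n} - T. sg (cnt T k) (X k (c (insert k T))))"
  unfolding koszul_d_def sg_def cnt_def by simp

lemma sg_add: "sg e (x + y) = sg e x + sg e y"
  by (simp add: sg_def)
lemma sg_sg: "sg a (sg b x) = sg (a + b) x"
  by (auto simp add: sg_def)
lemma sg_same: "sg a (sg a x) = x"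
  by (auto simp add: sg_def)
lemma sg_double: "sg (a + a) x = x" by (simp add: sg_def)
lemma sg_0: "sg e 0 = 0" by (simp add: sg_def)
lemma sg_sum: "sg e (sum f A) = (\<Sum>x\<in>A. sg e (f x))"
  by (auto simp add: sg_def sum_negf)
lemma additive_sg: "additive f \<Longrightarrow> f (sg e x) = sg e (f x)"
  by (simp add: sg_def additive.minus)
lemma sg_odd: "odd (a + b) \<Longrightarrow> sg a x + sg b x = 0"
  by (auto simp add: sg_def)

lemma cnt_insert: "finite A \<Longrightarrow> a \<notin> A \<Longrightarrow> cnt (insert a A) b = cnt A b + (if a < b then 1 else 0)"
proof -
  assume f: "finite A" and a: "a \<notin> A"
  have "{t\<in>insert a A. t < b} = (if a < b then insert a {t\<in>A. t < b} else {t\<in>A. t < b})" by auto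
  then show ?thesis using f a by (simp add: cnt_def)
qed

lemma parity:
  assumes f: "finite T" and l: "l \<in> T" and k: "k \<notin> T"
  shows "odd ((cnt T k + cnt (insert k T - {l}) l) + (cnt (T - {l}) l + cnt (T - {l}) k))"
proof -
  have kl: "k \<noteq> l" using l k by auto
  have T: "T = insert l (T - {l})" using l by auto
  have e1: "cnt T k = cnt (T - {l}) k + (if l < k then 1 else 0)"
    using cnt_insert[of "T - {l}" l k] f T by simp
  have i: "insert k T - {l} = insert k (T - {l})" using kl by auto
  have e2: "cnt (insert k T - {l}) l = cnt (T - {l}) l + (if k < l then 1 else 0)"
    unfolding i using cnt_insert[of "T - {l}" k l] f k by simp
  show ?thesis unfolding e1 e2 using kl by (cases "l < k") auto
qed

locale kz =
  fixes scale :: "'k::field_char_0 \<Rightarrow> 'm::ab_group_add \<Rightarrow> 'm"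
    and n :: nat and Mg :: "int \<Rightarrow> 'm set" and X D :: "nat \<Rightarrow> 'm \<Rightarrow> 'm"
  assumes W: "weyl_graded_module scale n Mg X D"
begin

lemma VS: "vector_space scale" using W unfolding weyl_graded_module_def by auto

sublocale vs: vector_space scale by (rule VS)

lemma subM: "vs.subspace (Mg j)" using W unfolding weyl_graded_module_def by auto

lemma linX: "i < n \<Longrightarrow> Vector_Spaces.linear scale scale (X i)"
  using W unfolding weyl_graded_module_def by auto
lemma linD: "i < n \<Longrightarrow> Vector_Spaces.linear scale scale (D i)"
  using W unfolding weyl_graded_module_def by auto

lemma addX: "i < n \<Longrightarrow> additive (X i)"
  using linX[of i] unfolding Vector_Spaces.linear_iff additive_def by auto
lemma addD: "i < n \<Longrightarrow> additive (D i)"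
  using linD[of i] unfolding Vector_Spaces.linear_iff additive_def by auto
lemma Xscale: "i < n \<Longrightarrow> X i (scale r x) = scale r (X i x)"
  using linX[of i] unfolding Vector_Spaces.linear_iff by auto
lemma Dscale: "i < n \<Longrightarrow> D i (scale r x) = scale r (D i x)"
  using linD[of i] unfolding Vector_Spaces.linear_iff by auto

lemma X0: "i < n \<Longrightarrow> X i 0 = 0" using addX additive.zero by blast
lemma D0: "i < n \<Longrightarrow> D i 0 = 0" using addD additive.zero by blast
lemma Xadd: "i < n \<Longrightarrow> X i (x + y) = X i x + X i y" using addX additive.add by blast
lemma Dadd: "i < n \<Longrightarrow> D i (x + y) = D i x + D i y" using addD additive.add by blast
lemma Xdiff: "i < n \<Longrightarrow> X i (x - y) = X i x - X i y" using addX additive.diff by blast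
lemma Xsum: "i < n \<Longrightarrow> X i (sum f A) = (\<Sum>a\<in>A. X i (f a))" using addX additive.sum by blast
lemma Dsum: "i < n \<Longrightarrow> D i (sum f A) = (\<Sum>a\<in>A. D i (f a))" using addD additive.sum by blast
lemma Xsg: "i < n \<Longrightarrow> X i (sg e x) = sg e (X i x)" using addX additive_sg by blast
lemma Dsg: "i < n \<Longrightarrow> D i (sg e x) = sg e (D i x)" using addD additive_sg by blast

lemma XM: "i < n \<Longrightarrow> z \<in> Mg j \<Longrightarrow> X i z \<in> Mg (j + 1)"
  using W unfolding weyl_graded_module_def by auto
lemma DM: "i < n \<Longrightarrow> z \<in> Mg j \<Longrightarrow> D i z \<in> Mg (j - 1)"
  using W unfolding weyl_graded_module_def by auto
lemma XX: "i < n \<Longrightarrow> k < n \<Longrightarrow> X i (X k z) = X k (X i z)"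
  using W unfolding weyl_graded_module_def by auto
lemma DX: "i < n \<Longrightarrow> k < n \<Longrightarrow> D i (X k z) = X k (D i z) + (if i = k then z else 0)"
proof -
  assume "i < n" "k < n"
  then have "D i (X k z) - X k (D i z) = (if i = k then z else 0)"
    using W unfolding weyl_graded_module_def by auto
  then show ?thesis by (metis add.commute diff_add_cancel)
qed

lemma homotopy:
  assumes supp: "\<forall>S. c S \<noteq> 0 \<longrightarrow> S \<subseteq> {..<n}" and TU: "T \<subseteq> {..<n}"
  shows "koszul_d n X (kh n D c) T + kh n D (koszul_d n X c) T
           = euler_op n X D (c T) + (\<Sum>l\<in>T. c T)"
proof -
  define U where "U = {..<n}"
  have fin: "finite T" using TU finite_subset by blast
  have TU': "T \<subseteq> U" using TU U_def by simp
  have A: "koszul_d n X (kh n D c) T = (\<Sum>k\<in>U-T. X k (D k (c T)))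
      + (\<Sum>k\<in>U-T. \<Sum>l\<in>T. sg (cnt T k + cnt (insert k T - {l}) l) (X k (D l (c (insert k T - {l})))))"
  proof -
    have "koszul_d n X (kh n D c) T = (\<Sum>k\<in>U-T. sg (cnt T k) (X k (kh n D c (insert k T))))"
      by (simp add: koszul_d_sg U_def)
    also have "\<dots> = (\<Sum>k\<in>U-T. X k (D k (c T))
        + (\<Sum>l\<in>T. sg (cnt T k + cnt (insert k T - {l}) l) (X k (D l (c (insert k T - {l}))))))"
    proof (rule sum.cong[OF refl])
      fix k assume k: "k \<in> U - T"
      then have kn: "k < n" and kT: "k \<notin> T" and ins: "insert k T \<subseteq> {..<n}"
        using TU by (auto simp: U_def)
      have "kh n D c (insert k T) = (\<Sum>l\<in>insert k T. sg (cnt (insert k T - {l}) l) (D l (c (insert k T - {l}))))"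
        using ins by (simp add: kh_def)
      also have "\<dots> = sg (cnt T k) (D k (c T)) + (\<Sum>l\<in>T. sg (cnt (insert k T - {l}) l) (D l (c (insert k T - {l}))))"
        using fin kT by (simp add: sum.insert)
      finally show "sg (cnt T k) (X k (kh n D c (insert k T))) = X k (D k (c T))
        + (\<Sum>l\<in>T. sg (cnt T k + cnt (insert k T - {l}) l) (X k (D l (c (insert k T - {l})))))"
        using kn by (simp add: Xadd Xsum Xsg sg_add sg_sg sg_sum sg_double)
    qed
    also have "\<dots> = (\<Sum>k\<in>U-T. X k (D k (c T)))
      + (\<Sum>k\<in>U-T. \<Sum>l\<in>T. sg (cnt T k + cnt (insert k T - {l}) l) (X k (D l (c (insert k T - {l})))))"
      by (rule sum.distrib)
    finally show ?thesis .
  qed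
  have B: "kh n D (koszul_d n X c) T = (\<Sum>l\<in>T. D l (X l (c T)))
      + (\<Sum>l\<in>T. \<Sum>k\<in>U-T. sg (cnt (T - {l}) l + cnt (T - {l}) k) (D l (X k (c (insert k (T - {l}))))))"
  proof -
    have "kh n D (koszul_d n X c) T = (\<Sum>l\<in>T. sg (cnt (T - {l}) l) (D l (koszul_d n X c (T - {l}))))"
      using TU by (simp add: kh_def)
    also have "\<dots> = (\<Sum>l\<in>T. D l (X l (c T))
      + (\<Sum>k\<in>U-T. sg (cnt (T - {l}) l + cnt (T - {l}) k) (D l (X k (c (insert k (T - {l})))))))"
    proof (rule sum.cong[OF refl])
      fix l assume l: "l \<in> T"
      then have ln: "l < n" using TU by auto
      have e: "U - (T - {l}) = insert l (U - T)" using l TU' by auto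
      have e2: "insert l (T - {l}) = T" using l by auto
      have "koszul_d n X c (T - {l}) = (\<Sum>k\<in>insert l (U - T). sg (cnt (T - {l}) k) (X k (c (insert k (T - {l})))))"
        by (simp add: koszul_d_sg U_def[symmetric] e)
      also have "\<dots> = sg (cnt (T - {l}) l) (X l (c T)) + (\<Sum>k\<in>U - T. sg (cnt (T - {l}) k) (X k (c (insert k (T - {l})))))"
        using l e2 by (simp add: sum.insert U_def)
      finally show "sg (cnt (T - {l}) l) (D l (koszul_d n X c (T - {l}))) = D l (X l (c T))
      + (\<Sum>k\<in>U-T. sg (cnt (T - {l}) l + cnt (T - {l}) k) (D l (X k (c (insert k (T - {l}))))))"
        using ln by (simp add: Dadd Dsum Dsg sg_add sg_sg sg_sum sg_same sg_double)
    qed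
    also have "\<dots> = (\<Sum>l\<in>T. D l (X l (c T)))
      + (\<Sum>l\<in>T. \<Sum>k\<in>U-T. sg (cnt (T - {l}) l + cnt (T - {l}) k) (D l (X k (c (insert k (T - {l}))))))"
      by (rule sum.distrib)
    finally show ?thesis .
  qed
  have C: "(\<Sum>k\<in>U-T. \<Sum>l\<in>T. sg (cnt T k + cnt (insert k T - {l}) l) (X k (D l (c (insert k T - {l})))))
     + (\<Sum>l\<in>T. \<Sum>k\<in>U-T. sg (cnt (T - {l}) l + cnt (T - {l}) k) (D l (X k (c (insert k (T - {l}))))))
     = 0"
  proof -
    have "(\<Sum>l\<in>T. \<Sum>k\<in>U-T. sg (cnt (T - {l}) l + cnt (T - {l}) k) (D l (X k (c (insert k (T - {l}))))))
       = (\<Sum>k\<in>U-T. \<Sum>l\<in>T. sg (cnt (T - {l}) l + cnt (T - {l}) k) (D l (X k (c (insert k (T - {l}))))))"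
      by (rule sum.swap)
    moreover have "(\<Sum>k\<in>U-T. \<Sum>l\<in>T. sg (cnt T k + cnt (insert k T - {l}) l) (X k (D l (c (insert k T - {l})))))
       + (\<Sum>k\<in>U-T. \<Sum>l\<in>T. sg (cnt (T - {l}) l + cnt (T - {l}) k) (D l (X k (c (insert k (T - {l}))))))
       = (\<Sum>k\<in>U-T. \<Sum>l\<in>T. sg (cnt T k + cnt (insert k T - {l}) l) (X k (D l (c (insert k T - {l}))))
          + sg (cnt (T - {l}) l + cnt (T - {l}) k) (D l (X k (c (insert k (T - {l}))))))"
      by (simp add: sum.distrib)
    moreover have "\<dots> = 0"
    proof (intro sum.neutral ballI)
      fix k l assume k: "k \<in> U - T" and l: "l \<in> T"
      then have kn: "k < n" and ln: "l < n" and kl: "k \<noteq> l" and kT: "k \<notin> T"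
        using TU by (auto simp: U_def)
      have i: "insert k T - {l} = insert k (T - {l})" using kl by auto
      have dx: "D l (X k (c (insert k (T - {l})))) = X k (D l (c (insert k (T - {l}))))"
        using DX[OF ln kn] kl by simp
      show "sg (cnt T k + cnt (insert k T - {l}) l) (X k (D l (c (insert k T - {l}))))
          + sg (cnt (T - {l}) l + cnt (T - {l}) k) (D l (X k (c (insert k (T - {l}))))) = 0"
        unfolding dx using sg_odd[OF parity[OF fin l kT]] by (simp add: i)
    qed
    ultimately show ?thesis by simp
  qed
  have E: "euler_op n X D (c T) = (\<Sum>k\<in>U-T. X k (D k (c T))) + (\<Sum>l\<in>T. X l (D l (c T)))"
    unfolding euler_op_def using sum.subset_diff[OF TU', of "\<lambda>k. X k (D k (c T))"] by (simp add: U_def)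
  have F: "(\<Sum>l\<in>T. D l (X l (c T))) = (\<Sum>l\<in>T. X l (D l (c T))) + (\<Sum>l\<in>T. c T)"
  proof -
    have "(\<Sum>l\<in>T. D l (X l (c T))) = (\<Sum>l\<in>T. X l (D l (c T)) + c T)"
      by (rule sum.cong[OF refl]) (use TU DX in auto)
    then show ?thesis by (simp add: sum.distrib)
  qed
  show ?thesis unfolding A B E F using C by (simp add: algebra_simps)
qed

lemma addE: "additive (euler_op n X D)"
proof
  fix x y
  have "(\<Sum>i<n. X i (D i (x + y))) = (\<Sum>i<n. X i (D i x) + X i (D i y))"
    by (rule sum.cong[OF refl]) (simp add: Xadd Dadd)
  then show "euler_op n X D (x + y) = euler_op n X D x + euler_op n X D y"
    by (simp add: euler_op_def sum.distrib)
qed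

lemma E0: "euler_op n X D 0 = 0" using addE additive.zero by blast

lemma Escale: "euler_op n X D (scale r x) = scale r (euler_op n X D x)"
proof -
  have "(\<Sum>i<n. X i (D i (scale r x))) = (\<Sum>i<n. scale r (X i (D i x)))"
    by (rule sum.cong[OF refl]) (simp add: Xscale Dscale)
  then show ?thesis by (simp add: euler_op_def vs.scale_sum_right)
qed

lemma EM: assumes z: "z \<in> Mg j" shows "euler_op n X D z \<in> Mg j"
  unfolding euler_op_def
proof (rule vs.subspace_sum[OF subM])
  fix i assume i: "i \<in> {..<n}"
  have "D i z \<in> Mg (j - 1)" using DM i z by simp
  then have "X i (D i z) \<in> Mg (j - 1 + 1)" using XM[of i "D i z" "j - 1"] i by simp
  then show "X i (D i z) \<in> Mg j" by simp
qed

lemma EX: "k < n \<Longrightarrow> euler_op n X D (X k w) = X k (euler_op n X D w) + X k w"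
proof -
  assume kn: "k < n"
  have "(\<Sum>i<n. X i (D i (X k w))) = (\<Sum>i<n. X k (X i (D i w)) + (if i = k then X k w else 0))"
    by (rule sum.cong[OF refl]) (simp add: DX kn Xadd XX X0)
  also have "\<dots> = (\<Sum>i<n. X k (X i (D i w))) + X k w"
    using kn by (simp add: sum.distrib)
  finally show ?thesis by (simp add: euler_op_def Xsum kn)
qed

definition LL :: "int \<Rightarrow> 'm \<Rightarrow> 'm" where
  "LL q w = euler_op n X D w - scale (of_int q) w"

lemma addL: "additive (LL q)"
  by standard (simp add: LL_def additive.add[OF addE] vs.scale_right_distrib algebra_simps)

lemma L0: "LL q 0 = 0" using addL additive.zero by blast

lemma LM: "z \<in> Mg j \<Longrightarrow> LL q z \<in> Mg j"
  unfolding LL_def by (intro vs.subspace_diff[OF subM] EM vs.subspace_scale[OF subM])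

lemma XL: "k < n \<Longrightarrow> X k (LL q w) = LL (q + 1) (X k w)"
  by (simp add: LL_def Xdiff Xscale EX vs.scale_left_distrib algebra_simps)

lemma d_LL: "koszul_d n X (\<lambda>S. LL q (c S)) T = LL (q + 1) (koszul_d n X c T)"
  unfolding koszul_d_sg additive.sum[OF addL]
  by (rule sum.cong[OF refl]) (simp add: XL additive_sg[OF addL])

lemma d_diff: "koszul_d n X (\<lambda>S. a S - b S) T = koszul_d n X a T - koszul_d n X b T"
proof -
  have "(\<Sum>k\<in>{..<n} - T. sg (cnt T k) (X k (a (insert k T) - b (insert k T))))
      = (\<Sum>k\<in>{..<n} - T. sg (cnt T k) (X k (a (insert k T))) - sg (cnt T k) (X k (b (insert k T))))"
    by (rule sum.cong[OF refl]) (auto simp: Xdiff sg_def)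
  then show ?thesis by (simp add: koszul_d_sg sum_subtractf)
qed

lemma d_scale: "koszul_d n X (\<lambda>S. scale r (a S)) T = scale r (koszul_d n X a T)"
proof -
  have "(\<Sum>k\<in>{..<n} - T. sg (cnt T k) (X k (scale r (a (insert k T)))))
      = (\<Sum>k\<in>{..<n} - T. scale r (sg (cnt T k) (X k (a (insert k T)))))"
    by (rule sum.cong[OF refl]) (auto simp: Xscale sg_def)
  then show ?thesis by (simp add: koszul_d_sg vs.scale_sum_right)
qed

lemma d_zero: "koszul_d n X (\<lambda>_. 0) = (\<lambda>_. 0)"
  by (rule ext) (simp add: koszul_d_sg X0 sg_0)

lemma kh_zero: "kh n D (\<lambda>_. 0) = (\<lambda>_. 0)"
  by (rule ext) (simp add: kh_def D0 sg_0 subset_eq)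

lemma d_kh_out: "\<not> T \<subseteq> {..<n} \<Longrightarrow> koszul_d n X (kh n D c) T = 0"
  by (simp add: koszul_d_sg kh_def X0 sg_0)

lemma chain_zero: "koszul_chain n Mg p j (\<lambda>_. 0)"
  by (simp add: koszul_chain_def vs.subspace_0[OF subM])

lemma chain_diff: "koszul_chain n Mg p j a \<Longrightarrow> koszul_chain n Mg p j b \<Longrightarrow> koszul_chain n Mg p j (\<lambda>S. a S - b S)"
  unfolding koszul_chain_def
  apply (intro conjI allI impI)
  subgoal for S by (cases "a S = 0") auto
  subgoal for S by (cases "a S = 0") auto
  subgoal for S by (simp add: vs.subspace_diff[OF subM])
  done

lemma chain_scale: "koszul_chain n Mg p j a \<Longrightarrow> koszul_chain n Mg p j (\<lambda>S. scale r (a S))"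
  unfolding koszul_chain_def
  apply (intro conjI allI impI)
  subgoal for S by (cases "a S = 0") auto
  subgoal for S by (cases "a S = 0") auto
  subgoal for S by (simp add: vs.subspace_scale[OF subM])
  done

lemma chain_LL: "koszul_chain n Mg p j a \<Longrightarrow> koszul_chain n Mg p j (\<lambda>S. LL q (a S))"
  unfolding koszul_chain_def
  apply (intro conjI allI impI)
  subgoal for S by (cases "a S = 0") (auto simp: L0)
  subgoal for S by (cases "a S = 0") (auto simp: L0)
  subgoal for S by (simp add: LM)
  done

lemma chain_d:
  assumes b: "koszul_chain n Mg (Suc p) j b"
  shows "koszul_chain n Mg p j (koszul_d n X b)"
proof -
  have V: "koszul_d n X b T \<in> Mg (j - int p)" for T
    unfolding koszul_d_sg
  proof (rule vs.subspace_sum[OF subM])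
    fix k assume k: "k \<in> {..<n} - T"
    have "b (insert k T) \<in> Mg (j - int (Suc p))" using b by (simp add: koszul_chain_def)
    then have "X k (b (insert k T)) \<in> Mg (j - int (Suc p) + 1)"
      using XM[of k "b (insert k T)" "j - int (Suc p)"] k by simp
    moreover have "j - int (Suc p) + 1 = j - int p" by simp
    ultimately have "X k (b (insert k T)) \<in> Mg (j - int p)" by simp
    then show "sg (cnt T k) (X k (b (insert k T))) \<in> Mg (j - int p)"
      by (simp add: sg_def vs.subspace_neg[OF subM])
  qed
  have S: "T \<subseteq> {..<n} \<and> card T = p" if ne: "koszul_d n X b T \<noteq> 0" for T
  proof -
  have "\<not> (\<forall>k\<in>{..<n} - T. sg (cnt T k) (X k (b (insert k T))) = 0)"
  proof
    assume "\<forall>k\<in>{..<n} - T. sg (cnt T k) (X k (b (insert k T))) = 0"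
    then have "koszul_d n X b T = 0" unfolding koszul_d_sg by (rule sum.neutral)
    with ne show False by simp
  qed
  then obtain k where k: "k \<in> {..<n} - T" and nz: "sg (cnt T k) (X k (b (insert k T))) \<noteq> 0"
    by blast
  have "b (insert k T) \<noteq> 0"
  proof
    assume "b (insert k T) = 0"
    with nz k show False by (simp add: X0 sg_0)
  qed
  then have i1: "insert k T \<subseteq> {..<n}" and i2: "card (insert k T) = Suc p"
    using b unfolding koszul_chain_def by blast+
  have fT: "finite T" by (rule finite_subset[OF _ finite_lessThan]) (use i1 in auto)
  have kT: "k \<notin> T" using k by simp
  have "card (insert k T) = Suc (card T)" using fT kT by simp
  then show "T \<subseteq> {..<n} \<and> card T = p" using i1 i2 by simp
  qed
  show ?thesis unfolding koszul_chain_def using V S by blast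
qed

lemma chain_kh:
  assumes c: "koszul_chain n Mg p j c"
  shows "koszul_chain n Mg (Suc p) j (kh n D c)"
proof -
  have V: "kh n D c T \<in> Mg (j - int (Suc p))" for T
  proof (cases "T \<subseteq> {..<n}")
    case True
    have e: "kh n D c T = (\<Sum>l\<in>T. sg (cnt (T - {l}) l) (D l (c (T - {l}))))"
      using True by (simp add: kh_def)
    show ?thesis unfolding e
    proof (rule vs.subspace_sum[OF subM])
      fix l assume l: "l \<in> T"
      have "c (T - {l}) \<in> Mg (j - int p)" using c by (simp add: koszul_chain_def)
      then have "D l (c (T - {l})) \<in> Mg (j - int p - 1)" using DM[of l "c (T - {l})" "j - int p"] l True by auto
      moreover have "j - int p - 1 = j - int (Suc p)" by simp
      ultimately have "D l (c (T - {l})) \<in> Mg (j - int (Suc p))" by simp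
      then show "sg (cnt (T - {l}) l) (D l (c (T - {l}))) \<in> Mg (j - int (Suc p))"
        by (simp add: sg_def vs.subspace_neg[OF subM])
    qed
  next
    case False then show ?thesis by (simp add: kh_def vs.subspace_0[OF subM])
  qed
  have S: "T \<subseteq> {..<n} \<and> card T = Suc p" if ne: "kh n D c T \<noteq> 0" for T
  proof -
  from ne have TU: "T \<subseteq> {..<n}" by (simp add: kh_def split: if_splits)
  have "\<not> (\<forall>l\<in>T. sg (cnt (T - {l}) l) (D l (c (T - {l}))) = 0)"
  proof
    assume "\<forall>l\<in>T. sg (cnt (T - {l}) l) (D l (c (T - {l}))) = 0"
    then have "(\<Sum>l\<in>T. sg (cnt (T - {l}) l) (D l (c (T - {l})))) = 0" by (rule sum.neutral)
    with ne TU show False by (simp add: kh_def)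
  qed
  then obtain l where l: "l \<in> T" and nz: "sg (cnt (T - {l}) l) (D l (c (T - {l}))) \<noteq> 0"
    by blast
  have "c (T - {l}) \<noteq> 0"
  proof
    assume "c (T - {l}) = 0"
    with nz l TU show False by (auto simp add: D0 sg_0)
  qed
  then have "card (T - {l}) = p" using c unfolding koszul_chain_def by blast
  moreover have "finite T" by (rule finite_subset[OF TU finite_lessThan])
  moreover have "card T = Suc (card (T - {l}))" using l \<open>finite T\<close> by (intro card.remove)
  ultimately show "T \<subseteq> {..<n} \<and> card T = Suc p" using TU by simp
  qed
  show ?thesis unfolding koszul_chain_def using V S by blast
qed

lemma pow0: "(LL q ^^ m) 0 = 0"
  by (induction m) (simp_all add: L0)

lemma main_ind:
  assumes j: "j \<noteq> 0"
  shows "koszul_chain n Mg i j c \<Longrightarrow> koszul_d n X c = (\<lambda>_. 0)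
    \<Longrightarrow> (\<forall>S. (LL (j - int i) ^^ a) (c S) = 0)
    \<Longrightarrow> \<exists>b. koszul_chain n Mg (Suc i) j b \<and> koszul_d n X b = c"
proof (induction a arbitrary: c)
  case 0
  then have "c = (\<lambda>_. 0)" by (simp add: fun_eq_iff)
  then show ?case using chain_zero d_zero by blast
next
  case (Suc a)
  define q where "q = j - int i"
  define c' where "c' = (\<lambda>S. LL q (c S))"
  have ch: "koszul_chain n Mg i j c" using Suc.prems(1) .
  have dc: "koszul_d n X c = (\<lambda>_. 0)" using Suc.prems(2) .
  have c'ch: "koszul_chain n Mg i j c'" unfolding c'_def by (rule chain_LL[OF ch])
  have dc': "koszul_d n X c' = (\<lambda>_. 0)"
    by (rule ext) (simp add: c'_def d_LL dc L0)
  have pw: "\<forall>S. (LL (j - int i) ^^ a) (c' S) = 0"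
  proof
    fix S
    have "(LL q ^^ Suc a) (c S) = 0" using Suc.prems(3) q_def by simp
    then show "(LL (j - int i) ^^ a) (c' S) = 0"
      unfolding c'_def q_def by (simp add: funpow_Suc_right del: funpow.simps)
  qed
  obtain b' where b'ch: "koszul_chain n Mg (Suc i) j b'" and db': "koszul_d n X b' = c'"
    using Suc.IH[OF c'ch dc' pw] by blast
  have supp: "\<forall>S. c S \<noteq> 0 \<longrightarrow> S \<subseteq> {..<n}" using ch unfolding koszul_chain_def by blast
  have hom: "koszul_d n X (kh n D c) T = c' T + scale (of_int j) (c T)" for T
  proof (cases "T \<subseteq> {..<n}")
    case True
    have h: "koszul_d n X (kh n D c) T + kh n D (koszul_d n X c) T
           = euler_op n X D (c T) + (\<Sum>l\<in>T. c T)" by (rule homotopy[OF supp True])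
    have k0: "kh n D (koszul_d n X c) T = 0" unfolding dc kh_zero by simp
    show ?thesis
    proof (cases "c T = 0")
      case True
      then show ?thesis using h k0 by (simp add: c'_def L0 E0)
    next
      case False
      then have ct: "card T = i" using ch unfolding koszul_chain_def by blast
      have "(\<Sum>l\<in>T. c T) = scale (of_nat i) (c T)" unfolding vs.sum_constant_scale ct ..
      moreover have "scale (of_int j) (c T) = scale (of_int q) (c T) + scale (of_nat i) (c T)"
        by (simp add: q_def flip: vs.scale_left_distrib)
      ultimately show ?thesis using h k0 by (simp add: c'_def LL_def)
    qed
  next
    case False
    then have "c T = 0" using supp by blast
    then show ?thesis using d_kh_out[OF False] by (simp add: c'_def L0)
  qed
  define b where "b = (\<lambda>S. scale (inverse (of_int j)) (kh n D c S - b' S))"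
  have bch: "koszul_chain n Mg (Suc i) j b"
    unfolding b_def by (intro chain_scale chain_diff chain_kh ch b'ch)
  have jj: "(of_int j :: 'k) \<noteq> 0" using j by simp
  have "koszul_d n X b = c"
  proof (rule ext)
    fix T
    have "koszul_d n X b T = scale (inverse (of_int j)) (koszul_d n X (kh n D c) T - koszul_d n X b' T)"
      unfolding b_def d_scale d_diff ..
    also have "\<dots> = scale (inverse (of_int j)) (scale (of_int j) (c T))"
      using hom[of T] db' by simp
    also have "\<dots> = c T" using jj by simp
    finally show "koszul_d n X b T = c T" .
  qed
  then show ?case using bch by blast
qed

lemma final:
  assumes G: "generalized_eulerian scale n Mg X D"
    and j: "j \<noteq> 0" and ch: "koszul_chain n Mg i j c" and dc: "koszul_d n X c = (\<lambda>_. 0)"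
  shows "\<exists>b. koszul_chain n Mg (Suc i) j b \<and> koszul_d n X b = c"
proof -
  define q where "q = j - int i"
  have ex: "\<exists>a. (LL q ^^ a) (c S) = 0" for S
  proof -
    have "c S \<in> Mg q" using ch q_def unfolding koszul_chain_def by blast
    then obtain a where "((\<lambda>w. euler_op n X D w - scale (of_int q) w) ^^ a) (c S) = 0"
      using G unfolding generalized_eulerian_def by blast
    moreover have "(\<lambda>w. euler_op n X D w - scale (of_int q) w) = LL q"
      by (simp add: fun_eq_iff LL_def)
    ultimately show ?thesis by auto
  qed
  define A where "A S = (SOME a. (LL q ^^ a) (c S) = 0)" for S
  have A: "(LL q ^^ A S) (c S) = 0" for S
    unfolding A_def using ex[of S] by (rule someI_ex)
  define N where "N = Max (A ` Pow {..<n})"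
  have all: "\<forall>S. (LL q ^^ N) (c S) = 0"
  proof
    fix S
    show "(LL q ^^ N) (c S) = 0"
    proof (cases "S \<in> Pow {..<n}")
      case True
      then have le: "A S \<le> N" unfolding N_def by (intro Max_ge) auto
      have e: "LL q ^^ N = LL q ^^ (N - A S) \<circ> LL q ^^ A S"
        using le by (simp add: funpow_add[symmetric])
      have "(LL q ^^ N) (c S) = (LL q ^^ (N - A S)) ((LL q ^^ A S) (c S))"
        by (simp add: e)
      then show ?thesis using A pow0 by simp
    next
      case False
      then have "c S = 0" using ch unfolding koszul_chain_def by blast
      then show ?thesis using pow0 by simp
    qed
  qed
  show ?thesis using main_ind[OF j ch dc] all q_def by blast
qed

end

theorem theorem5p1:
  fixes scale :: "'k::field_char_0 \<Rightarrow> 'm::ab_group_add \<Rightarrow> 'm"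
    and n :: nat and Mg :: "int \<Rightarrow> 'm set" and X D :: "nat \<Rightarrow> 'm \<Rightarrow> 'm"
  assumes "weyl_graded_module scale n Mg X D"
    and "generalized_eulerian scale n Mg X D"
  shows "\<forall>i j c. j \<noteq> 0 \<longrightarrow> koszul_chain n Mg i j c \<longrightarrow> koszul_d n X c = (\<lambda>_. 0) \<longrightarrow>
           (\<exists>b. koszul_chain n Mg (Suc i) j b \<and> koszul_d n X b = c)"
proof -
  interpret K: kz scale n Mg X D by unfold_locales (rule assms(1))
  show ?thesis using K.final[OF assms(2)] by blast
qed

end
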